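(* Let $a,b\in\mathbb D$ with $a\neq b$. For $\varepsilon\in\mathbb C\setminus\{0\}$ let $L^\varepsilon_{aVbV}$ denote Coman's Lempert function on $\mathbb D^2$ with the four poles $(a,0),(b,0),(b,\varepsilon),(a,\varepsilon)$, all of weight $1$. Then for every $z\in\mathbb D^2$, $$\limsup_{\varepsilon\to0}L^\varepsilon_{aVbV}(z)\le\min\{L_{a0b0}(z),L_{aVb0}(z),L_{a0bV}(z),L_{aVbV}(z)\}.$$
   Context: $\mathbb D$ is the open unit disc; maps $\varphi=(\varphi_1,\varphi_2)$ are holomorphic $\mathbb D\to\mathbb D^2$, $\zeta_1,\zeta_2\in\mathbb D$. Coman's Lempert function with poles $p_1,\dots,p_k$ of weight 1: $\inf\{\sum_j\log|\zeta_j|:\varphi(0)=z,\varphi(\zeta_j)=p_j\}$. All of the following are infima over $\varphi$ with $\varphi(0)=z$, $\varphi(\zeta_1)=(a,0)$, $\varphi(\zeta_2)=(b,0)$: $L_{a0b0}(z)=\inf(\log|\zeta_1|+\log|\zeta_2|)$; $L_{a0bV}(z)=\inf(\log|\zeta_1|+2\log|\zeta_2|)$ with additionally $\varphi_1'(\zeta_2)=0$; $L_{aVb0}(z)=\inf(2\log|\zeta_1|+\log|\zeta_2|)$ with additionally $\varphi_1'(\zeta_1)=0$; $L_{aVbV}(z)=\inf(2\log|\zeta_1|+2\log|\zeta_2|)$ with additionally $\varphi_1'(\zeta_1)=\varphi_1'(\zeta_2)=0$. *)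

theory Defs
  imports "HOL-Complex_Analysis.Complex_Analysis"
begin

abbreviation unit_disc :: "complex set" where
  "unit_disc \<equiv> ball 0 1"

definition disc_map :: "(complex \<Rightarrow> complex) \<Rightarrow> (complex \<Rightarrow> complex) \<Rightarrow> bool" where
  "disc_map \<phi>1 \<phi>2 \<longleftrightarrow> \<phi>1 holomorphic_on unit_disc \<and> \<phi>2 holomorphic_on unit_disc
     \<and> \<phi>1 ` unit_disc \<subseteq> unit_disc \<and> \<phi>2 ` unit_disc \<subseteq> unit_disc"

definition elog :: "real \<Rightarrow> ereal" where
  "elog r = (if r = 0 then -\<infinity> else ereal (ln r))"

text \<open>Coman's Lempert function on \<open>D^2\<close> with poles \<open>P!0, ..., P!(k-1)\<close>, all of weight 1
  (infimum over the empty set is \<open>+\<infinity>\<close>).\<close>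
definition coman_lempert :: "(complex \<times> complex) list \<Rightarrow> complex \<times> complex \<Rightarrow> ereal" where
  "coman_lempert P z = Inf {(\<Sum>j<length P. elog (cmod (\<zeta> j))) | \<phi>1 \<phi>2 \<zeta>.
      disc_map \<phi>1 \<phi>2 \<and> (\<phi>1 0, \<phi>2 0) = z \<and>
      (\<forall>j<length P. \<zeta> j \<in> unit_disc \<and> (\<phi>1 (\<zeta> j), \<phi>2 (\<zeta> j)) = P ! j)}"

definition L_a0b0 :: "complex \<Rightarrow> complex \<Rightarrow> complex \<times> complex \<Rightarrow> ereal" where
  "L_a0b0 a b z = Inf {elog (cmod \<zeta>1) + elog (cmod \<zeta>2) | \<phi>1 \<phi>2 \<zeta>1 \<zeta>2.
      disc_map \<phi>1 \<phi>2 \<and> (\<phi>1 0, \<phi>2 0) = z \<and> \<zeta>1 \<in> unit_disc \<and> \<zeta>2 \<in> unit_disc \<and>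
      (\<phi>1 \<zeta>1, \<phi>2 \<zeta>1) = (a, 0) \<and> (\<phi>1 \<zeta>2, \<phi>2 \<zeta>2) = (b, 0)}"

definition L_a0bV :: "complex \<Rightarrow> complex \<Rightarrow> complex \<times> complex \<Rightarrow> ereal" where
  "L_a0bV a b z = Inf {elog (cmod \<zeta>1) + 2 * elog (cmod \<zeta>2) | \<phi>1 \<phi>2 \<zeta>1 \<zeta>2.
      disc_map \<phi>1 \<phi>2 \<and> (\<phi>1 0, \<phi>2 0) = z \<and> \<zeta>1 \<in> unit_disc \<and> \<zeta>2 \<in> unit_disc \<and>
      (\<phi>1 \<zeta>1, \<phi>2 \<zeta>1) = (a, 0) \<and> (\<phi>1 \<zeta>2, \<phi>2 \<zeta>2) = (b, 0) \<and>
      deriv \<phi>1 \<zeta>2 = 0}"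

definition L_aVb0 :: "complex \<Rightarrow> complex \<Rightarrow> complex \<times> complex \<Rightarrow> ereal" where
  "L_aVb0 a b z = Inf {2 * elog (cmod \<zeta>1) + elog (cmod \<zeta>2) | \<phi>1 \<phi>2 \<zeta>1 \<zeta>2.
      disc_map \<phi>1 \<phi>2 \<and> (\<phi>1 0, \<phi>2 0) = z \<and> \<zeta>1 \<in> unit_disc \<and> \<zeta>2 \<in> unit_disc \<and>
      (\<phi>1 \<zeta>1, \<phi>2 \<zeta>1) = (a, 0) \<and> (\<phi>1 \<zeta>2, \<phi>2 \<zeta>2) = (b, 0) \<and>
      deriv \<phi>1 \<zeta>1 = 0}"

definition L_aVbV :: "complex \<Rightarrow> complex \<Rightarrow> complex \<times> complex \<Rightarrow> ereal" where
  "L_aVbV a b z = Inf {2 * elog (cmod \<zeta>1) + 2 * elog (cmod \<zeta>2) | \<phi>1 \<phi>2 \<zeta>1 \<zeta>2.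
      disc_map \<phi>1 \<phi>2 \<and> (\<phi>1 0, \<phi>2 0) = z \<and> \<zeta>1 \<in> unit_disc \<and> \<zeta>2 \<in> unit_disc \<and>
      (\<phi>1 \<zeta>1, \<phi>2 \<zeta>1) = (a, 0) \<and> (\<phi>1 \<zeta>2, \<phi>2 \<zeta>2) = (b, 0) \<and>
      deriv \<phi>1 \<zeta>1 = 0 \<and> deriv \<phi>1 \<zeta>2 = 0}"

end

theory Submission
  imports Defs
begin

lemma elog_mult: "0 \<le> x \<Longrightarrow> 0 \<le> y \<Longrightarrow> elog (x*y) = elog x + elog y"
  by (auto simp: elog_def ln_mult)

lemma elog_le_exp: assumes "0 \<le> x" "x \<le> exp M" shows "elog x \<le> ereal M"
proof (cases "x = 0")
  case False
  then have "ln x \<le> ln (exp M)" using assms by (intro ln_mono) auto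
  then show ?thesis using False by (simp add: elog_def)
qed (simp add: elog_def)

lemma elog_less_imp: "0 \<le> x \<Longrightarrow> elog x < ereal M \<Longrightarrow> x < exp M"
  by (auto simp: elog_def split: if_splits) (metis exp_less_mono exp_ln order_less_le)

lemma ereal_le_by_reals: fixes y T :: ereal
  assumes "\<And>M. T < ereal M \<Longrightarrow> y \<le> ereal M" shows "y \<le> T"
proof (rule ccontr)
  assume "\<not> y \<le> T" then have "T < y" by simp
  then obtain M where "T < ereal M" "ereal M < y" using ereal_dense2 by blast
  with assms show False by fastforce
qed

lemma coman_bound:
  assumes "disc_map p1 p2" "p1 0 = fst z" "p2 0 = snd z"
    "x1 \<in> unit_disc" "x2 \<in> unit_disc" "x3 \<in> unit_disc" "x4 \<in> unit_disc"
    "p1 x1 = a" "p2 x1 = 0" "p1 x2 = b" "p2 x2 = 0" "p1 x3 = b" "p2 x3 = e" "p1 x4 = a" "p2 x4 = e"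
  shows "coman_lempert [(a, 0), (b, 0), (b, e), (a, e)] z
     \<le> elog (cmod x1) + elog (cmod x2) + elog (cmod x3) + elog (cmod x4)"
proof -
  define \<zeta> where "\<zeta> = (\<lambda>j::nat. [x1,x2,x3,x4] ! j)"
  have "(\<Sum>j<length [(a, 0), (b, 0), (b, e), (a, e)]. elog (cmod (\<zeta> j)))
      = elog (cmod x1) + elog (cmod x2) + elog (cmod x3) + elog (cmod x4)"
    by (simp add: eval_nat_numeral \<zeta>_def)
  moreover have "(\<Sum>j<length [(a, 0), (b, 0), (b, e), (a, e)]. elog (cmod (\<zeta> j))) \<in>
     {(\<Sum>j<length [(a, 0), (b, 0), (b, e), (a, e)]. elog (cmod (\<zeta> j))) | \<phi>1 \<phi>2 \<zeta>.
      disc_map \<phi>1 \<phi>2 \<and> (\<phi>1 0, \<phi>2 0) = z \<and>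
      (\<forall>j<length [(a, 0), (b, 0), (b, e), (a, e)]. \<zeta> j \<in> unit_disc \<and> (\<phi>1 (\<zeta> j), \<phi>2 (\<zeta> j)) = [(a, 0), (b, 0), (b, e), (a, e)] ! j)}"
  proof -
    have "\<forall>j<4. \<zeta> j \<in> unit_disc \<and> (p1 (\<zeta> j), p2 (\<zeta> j)) = [(a, 0), (b, 0), (b, e), (a, e)] ! j"
    proof (intro allI impI)
      fix j :: nat assume "j < 4"
      then have "j = 0 \<or> j = 1 \<or> j = 2 \<or> j = 3" by auto
      then show "\<zeta> j \<in> unit_disc \<and> (p1 (\<zeta> j), p2 (\<zeta> j)) = [(a, 0), (b, 0), (b, e), (a, e)] ! j"
        using assms by (auto simp: \<zeta>_def)
    qed
    moreover have "(p1 0, p2 0) = z" using assms by (simp add: prod_eq_iff)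
    ultimately show ?thesis using assms(1)
      by (intro CollectI exI[of _ p1] exI[of _ p2] exI[of _ \<zeta>]) simp
  qed
  ultimately show ?thesis unfolding coman_lempert_def by (metis (no_types, lifting) Inf_lower)
qed

definition lag :: "complex \<Rightarrow> complex \<Rightarrow> complex \<Rightarrow> complex \<Rightarrow> complex \<Rightarrow> complex" where
  "lag x1 x2 x3 x4 l = l*(l-x1)*(l-x2)*(l-x4) * inverse (x3*(x3-x1)*(x3-x2)*(x3-x4))"

lemma lag_bound:
  assumes "cmod l \<le> 1" "cmod x1 \<le> 1" "cmod x2 \<le> 1" "cmod x4 \<le> 1"
  shows "cmod (lag x1 x2 x3 x4 l) \<le> 16 / (cmod x3 * cmod (x3-x1) * cmod (x3-x2) * cmod (x3-x4))"
proof -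
  have a: "cmod (l - x) \<le> 2" if "cmod x \<le> 1" for x
    using norm_triangle_ineq4[of l x] that assms(1) by linarith
  have "cmod l * cmod (l-x1) * cmod (l-x2) * cmod (l-x4) \<le> 1*2*2*2"
    by (intro mult_mono a assms) auto
  then have n: "cmod l * cmod (l-x1) * cmod (l-x2) * cmod (l-x4) \<le> 16" by simp
  show ?thesis unfolding lag_def norm_mult norm_inverse divide_inverse
    by (intro mult_right_mono n) simp
qed

lemma lag_vals:
  "lag x1 x2 x3 x4 0 = 0" "lag x1 x2 x3 x4 x1 = 0" "lag x1 x2 x3 x4 x2 = 0" "lag x1 x2 x3 x4 x4 = 0"
  by (auto simp: lag_def)

lemma lag_one: "x3 \<noteq> 0 \<Longrightarrow> x3 \<noteq> x1 \<Longrightarrow> x3 \<noteq> x2 \<Longrightarrow> x3 \<noteq> x4 \<Longrightarrow> lag x1 x2 x3 x4 x3 = 1"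
  unfolding lag_def by (intro right_inverse) auto

lemma lag_holo: "lag x1 x2 x3 x4 holomorphic_on S"
  unfolding lag_def by (intro holomorphic_intros) 

lemma interp1:
  assumes "F holomorphic_on unit_disc" "\<forall>l\<in>unit_disc. cmod (F l) \<le> K"
    "x1 \<in> unit_disc" "x2 \<in> unit_disc" "x3 \<in> unit_disc" "x4 \<in> unit_disc"
    "16 * (cmod c3 / (cmod x3 * cmod (x3-x1) * cmod (x3-x2) * cmod (x3-x4))
         + cmod c4 / (cmod x4 * cmod (x4-x1) * cmod (x4-x2) * cmod (x4-x3))) < 1 - K"
  shows "(\<lambda>l. F l + c3 * lag x1 x2 x3 x4 l + c4 * lag x1 x2 x4 x3 l) holomorphic_on unit_disc"
    "(\<lambda>l. F l + c3 * lag x1 x2 x3 x4 l + c4 * lag x1 x2 x4 x3 l) ` unit_disc \<subseteq> unit_disc"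
proof -
  show "(\<lambda>l. F l + c3 * lag x1 x2 x3 x4 l + c4 * lag x1 x2 x4 x3 l) holomorphic_on unit_disc"
    by (intro holomorphic_intros assms(1) lag_holo)
  show "(\<lambda>l. F l + c3 * lag x1 x2 x3 x4 l + c4 * lag x1 x2 x4 x3 l) ` unit_disc \<subseteq> unit_disc"
  proof
    fix y assume "y \<in> (\<lambda>l. F l + c3 * lag x1 x2 x3 x4 l + c4 * lag x1 x2 x4 x3 l) ` unit_disc"
    then obtain l where l: "l \<in> unit_disc" and y: "y = F l + c3 * lag x1 x2 x3 x4 l + c4 * lag x1 x2 x4 x3 l" by auto
    have le1: "cmod l \<le> 1" "cmod x1 \<le> 1" "cmod x2 \<le> 1" "cmod x3 \<le> 1" "cmod x4 \<le> 1"
      using l assms(3-6) by (auto simp: dist_norm)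
    have b3: "cmod (c3 * lag x1 x2 x3 x4 l) \<le> cmod c3 * (16 / (cmod x3 * cmod (x3-x1) * cmod (x3-x2) * cmod (x3-x4)))"
      unfolding norm_mult by (intro mult_left_mono lag_bound le1) auto
    have b4: "cmod (c4 * lag x1 x2 x4 x3 l) \<le> cmod c4 * (16 / (cmod x4 * cmod (x4-x1) * cmod (x4-x2) * cmod (x4-x3)))"
      unfolding norm_mult by (intro mult_left_mono lag_bound le1) auto
    have "cmod y \<le> cmod (F l) + cmod (c3 * lag x1 x2 x3 x4 l) + cmod (c4 * lag x1 x2 x4 x3 l)"
      unfolding y by (meson norm_triangle_le norm_triangle_ineq add_mono order_refl order_trans)
    also have "\<dots> < 1" using b3 b4 assms(7) assms(2)[rule_format, OF l] by argo
    finally show "y \<in> unit_disc" by simp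
  qed
qed

lemma L2:
  assumes F1h: "F1 holomorphic_on unit_disc" and F2h: "F2 holomorphic_on unit_disc"
    and bd: "\<forall>l\<in>unit_disc. cmod (F1 l) \<le> K \<and> cmod (F2 l) \<le> K"
    and z: "F1 0 = fst z" "F2 0 = snd z"
    and v: "F1 x1 = a" "F2 x1 = 0" "F1 x2 = b" "F2 x2 = 0"
    and xs: "x1 \<in> unit_disc" "x2 \<in> unit_disc" "x3 \<in> unit_disc" "x4 \<in> unit_disc"
    and u3: "x3 \<noteq> 0" "x3 \<noteq> x1" "x3 \<noteq> x2" "x3 \<noteq> x4"
    and u4: "x4 \<noteq> 0" "x4 \<noteq> x1" "x4 \<noteq> x2"
    and e1: "16 * (cmod (b - F1 x3) / (cmod x3 * cmod (x3-x1) * cmod (x3-x2) * cmod (x3-x4))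
         + cmod (a - F1 x4) / (cmod x4 * cmod (x4-x1) * cmod (x4-x2) * cmod (x4-x3))) < 1 - K"
    and e2: "16 * (cmod (e - F2 x3) / (cmod x3 * cmod (x3-x1) * cmod (x3-x2) * cmod (x3-x4))
         + cmod (e - F2 x4) / (cmod x4 * cmod (x4-x1) * cmod (x4-x2) * cmod (x4-x3))) < 1 - K"
  shows "coman_lempert [(a, 0), (b, 0), (b, e), (a, e)] z
     \<le> elog (cmod x1) + elog (cmod x2) + elog (cmod x3) + elog (cmod x4)"
proof -
  define p1 where "p1 = (\<lambda>l. F1 l + (b - F1 x3) * lag x1 x2 x3 x4 l + (a - F1 x4) * lag x1 x2 x4 x3 l)"
  define p2 where "p2 = (\<lambda>l. F2 l + (e - F2 x3) * lag x1 x2 x3 x4 l + (e - F2 x4) * lag x1 x2 x4 x3 l)"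
  have b1: "\<forall>l\<in>unit_disc. cmod (F1 l) \<le> K" and b2: "\<forall>l\<in>unit_disc. cmod (F2 l) \<le> K" using bd by auto
  have "disc_map p1 p2"
    unfolding disc_map_def p1_def p2_def
    using interp1[OF F1h b1 xs e1] interp1[OF F2h b2 xs e2] by auto
  moreover have l3: "lag x1 x2 x3 x4 x3 = 1" using u3 by (intro lag_one) auto
  have l4: "lag x1 x2 x4 x3 x4 = 1" using u4 u3 by (intro lag_one) auto
  have l3': "lag x1 x2 x4 x3 x3 = 0" and l4': "lag x1 x2 x3 x4 x4 = 0" by (simp_all add: lag_vals)
  show ?thesis
    by (rule coman_bound[OF \<open>disc_map p1 p2\<close>])
       (use xs z v l3 l4 l3' l4' in \<open>simp_all add: p1_def p2_def lag_vals\<close>)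
qed

definition good_pair :: "(complex\<Rightarrow>complex) \<Rightarrow> (complex\<Rightarrow>complex) \<Rightarrow> complex \<Rightarrow> complex \<Rightarrow> complex \<Rightarrow> (complex\<Rightarrow>complex) \<Rightarrow> bool" where
 "good_pair F1 F2 a x1 p4 h \<longleftrightarrow> x1 \<in> unit_disc \<and> p4 \<in> unit_disc \<and> p4 \<noteq> 0 \<and> F1 x1 = a \<and> F2 x1 = 0 \<and> F1 p4 = a
   \<and> (h \<longlongrightarrow> p4 - x1) (at 0) \<and> (\<forall>\<^sub>F e in at 0. h e \<noteq> 0)
   \<and> ((\<lambda>e. (a - F1 (x1 + h e)) / h e) \<longlongrightarrow> 0) (at 0)
   \<and> ((\<lambda>e. (e - F2 (x1 + h e)) / h e) \<longlongrightarrow> 0) (at 0)"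

lemma err_lim:
  fixes uu :: "complex \<Rightarrow> complex" and h :: "complex \<Rightarrow> complex"
  assumes "((\<lambda>e. c e / h e) \<longlongrightarrow> 0) (at 0)" "(uu \<longlongrightarrow> qu) (at 0)" "(ww \<longlongrightarrow> qw) (at 0)"
    "qu \<noteq> 0" "qu \<noteq> cB" "qu \<noteq> qw" "\<forall>\<^sub>F e in at 0. uu e - cA = h e"
  shows "((\<lambda>e. cmod (c e) / (cmod (uu e) * cmod (uu e - cA) * cmod (uu e - cB) * cmod (uu e - ww e))) \<longlongrightarrow> 0) (at 0)"
proof -
  have "((\<lambda>e. cmod (c e / h e) / (cmod (uu e) * cmod (uu e - cB) * cmod (uu e - ww e))) \<longlongrightarrow>
      cmod 0 / (cmod qu * cmod (qu - cB) * cmod (qu - qw))) (at 0)"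
    using assms by (intro tendsto_intros) auto
  then have "((\<lambda>e. cmod (c e / h e) / (cmod (uu e) * cmod (uu e - cB) * cmod (uu e - ww e))) \<longlongrightarrow> 0) (at 0)"
    by simp
  then show ?thesis
  proof (rule Lim_transform_eventually)
    show "\<forall>\<^sub>F e in at 0. cmod (c e / h e) / (cmod (uu e) * cmod (uu e - cB) * cmod (uu e - ww e)) =
          cmod (c e) / (cmod (uu e) * cmod (uu e - cA) * cmod (uu e - cB) * cmod (uu e - ww e))"
      using assms(7) by eventually_elim (simp add: norm_divide field_simps)
  qed
qed

lemma L3:
  assumes F1h: "F1 holomorphic_on unit_disc" and F2h: "F2 holomorphic_on unit_disc"
    and bd: "\<forall>l\<in>unit_disc. cmod (F1 l) \<le> K \<and> cmod (F2 l) \<le> K" and K: "K < 1"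
    and z: "F1 0 = fst z" "F2 0 = snd z"
    and pa: "good_pair F1 F2 a x1 p4 h" and pb: "good_pair F1 F2 b x2 p3 k" and ab: "a \<noteq> b"
    and M: "cmod x1 * cmod x2 * cmod p3 * cmod p4 < exp M"
  shows "\<forall>\<^sub>F e in at 0. coman_lempert [(a, 0), (b, 0), (b, e), (a, e)] z \<le> ereal M"
proof -
  define x3 where "x3 = (\<lambda>e. x2 + k e)"
  define x4 where "x4 = (\<lambda>e. x1 + h e)"
  note pa' = pa[unfolded good_pair_def] and pb' = pb[unfolded good_pair_def]
  have "((\<lambda>e. x2 + k e) \<longlongrightarrow> x2 + (p3 - x2)) (at 0)" using pb' by (intro tendsto_intros) auto
  then have t3: "(x3 \<longlongrightarrow> p3) (at 0)" unfolding x3_def by simp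
  have "((\<lambda>e. x1 + h e) \<longlongrightarrow> x1 + (p4 - x1)) (at 0)" using pa' by (intro tendsto_intros) auto
  then have t4: "(x4 \<longlongrightarrow> p4) (at 0)" unfolding x4_def by simp
  have d: "p4 \<noteq> x2" "p4 \<noteq> p3" "p3 \<noteq> x1" "p3 \<noteq> p4" "p4 \<noteq> 0" "p3 \<noteq> 0"
    using pa' pb' ab by metis+
  have ev_in: "\<forall>\<^sub>F e in at 0. x3 e \<in> unit_disc \<and> x4 e \<in> unit_disc"
    using topological_tendstoD[OF t3 open_ball, of 0 1] topological_tendstoD[OF t4 open_ball, of 0 1] pa' pb'
    by (auto intro: eventually_conj)
  have ev_ne: "\<forall>\<^sub>F e in at 0. x3 e \<noteq> 0 \<and> x3 e \<noteq> x1 \<and> x3 e \<noteq> x2 \<and> x3 e \<noteq> x4 e \<and> x4 e \<noteq> 0 \<and> x4 e \<noteq> x1 \<and> x4 e \<noteq> x2"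
  proof -
    have "\<forall>\<^sub>F e in at 0. x3 e \<noteq> 0" using tendsto_imp_eventually_ne[OF t3 d(6)] .
    moreover have "\<forall>\<^sub>F e in at 0. x3 e \<noteq> x1" using tendsto_imp_eventually_ne[OF t3 d(3)] .
    moreover have "\<forall>\<^sub>F e in at 0. x3 e - x4 e \<noteq> 0"
      using tendsto_imp_eventually_ne[OF tendsto_diff[OF t3 t4], of 0] d by simp
    moreover have "\<forall>\<^sub>F e in at 0. x4 e \<noteq> 0" using tendsto_imp_eventually_ne[OF t4 d(5)] .
    moreover have "\<forall>\<^sub>F e in at 0. x4 e \<noteq> x2" using tendsto_imp_eventually_ne[OF t4 d(1)] .
    moreover have "\<forall>\<^sub>F e in at 0. h e \<noteq> 0" "\<forall>\<^sub>F e in at 0. k e \<noteq> 0" using pa' pb' by auto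
    ultimately show ?thesis by eventually_elim (auto simp: x3_def x4_def)
  qed
  have lim1: "((\<lambda>e. 16 * (cmod (b - F1 (x3 e)) / (cmod (x3 e) * cmod (x3 e-x1) * cmod (x3 e-x2) * cmod (x3 e-x4 e))
         + cmod (a - F1 (x4 e)) / (cmod (x4 e) * cmod (x4 e-x1) * cmod (x4 e-x2) * cmod (x4 e-x3 e)))) \<longlongrightarrow> 16 * (0 + 0)) (at 0)"
  proof (intro tendsto_intros)
    have "((\<lambda>e. cmod (b - F1 (x3 e)) / (cmod (x3 e) * cmod (x3 e-x2) * cmod (x3 e-x1) * cmod (x3 e-x4 e))) \<longlongrightarrow> 0) (at 0)"
      by (rule err_lim[where h=k and uu=x3 and cA=x2 and cB=x1 and ww=x4 and qu=p3 and qw=p4]) (use pb' t3 t4 d in \<open>auto simp: x3_def\<close>)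
    then show "((\<lambda>e. cmod (b - F1 (x3 e)) / (cmod (x3 e) * cmod (x3 e-x1) * cmod (x3 e-x2) * cmod (x3 e-x4 e))) \<longlongrightarrow> 0) (at 0)"
      by (simp add: mult_ac)
    show "((\<lambda>e. cmod (a - F1 (x4 e)) / (cmod (x4 e) * cmod (x4 e-x1) * cmod (x4 e-x2) * cmod (x4 e-x3 e))) \<longlongrightarrow> 0) (at 0)"
      by (rule err_lim[where h=h and uu=x4 and cA=x1 and cB=x2 and ww=x3 and qu=p4 and qw=p3]) (use pa' t3 t4 d in \<open>auto simp: x4_def\<close>)
  qed
  have lim2: "((\<lambda>e. 16 * (cmod (e - F2 (x3 e)) / (cmod (x3 e) * cmod (x3 e-x1) * cmod (x3 e-x2) * cmod (x3 e-x4 e))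
         + cmod (e - F2 (x4 e)) / (cmod (x4 e) * cmod (x4 e-x1) * cmod (x4 e-x2) * cmod (x4 e-x3 e)))) \<longlongrightarrow> 16 * (0 + 0)) (at 0)"
  proof (intro tendsto_intros)
    have "((\<lambda>e. cmod (e - F2 (x3 e)) / (cmod (x3 e) * cmod (x3 e-x2) * cmod (x3 e-x1) * cmod (x3 e-x4 e))) \<longlongrightarrow> 0) (at 0)"
      by (rule err_lim[where h=k and uu=x3 and cA=x2 and cB=x1 and ww=x4 and qu=p3 and qw=p4]) (use pb' t3 t4 d in \<open>auto simp: x3_def\<close>)
    then show "((\<lambda>e. cmod (e - F2 (x3 e)) / (cmod (x3 e) * cmod (x3 e-x1) * cmod (x3 e-x2) * cmod (x3 e-x4 e))) \<longlongrightarrow> 0) (at 0)"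
      by (simp add: mult_ac)
    show "((\<lambda>e. cmod (e - F2 (x4 e)) / (cmod (x4 e) * cmod (x4 e-x1) * cmod (x4 e-x2) * cmod (x4 e-x3 e))) \<longlongrightarrow> 0) (at 0)"
      by (rule err_lim[where h=h and uu=x4 and cA=x1 and cB=x2 and ww=x3 and qu=p4 and qw=p3]) (use pa' t3 t4 d in \<open>auto simp: x4_def\<close>)
  qed
  have K1: "0 < 1 - K" using K by simp
  have K1': "16 * (0 + 0) < 1 - K" using K by simp
  note ev1 = order_tendstoD(2)[OF lim1 K1'] and ev2 = order_tendstoD(2)[OF lim2 K1']
  have limP: "((\<lambda>e. cmod x1 * cmod x2 * cmod (x3 e) * cmod (x4 e)) \<longlongrightarrow> cmod x1 * cmod x2 * cmod p3 * cmod p4) (at 0)"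
    by (intro tendsto_intros t3 t4)
  have evP: "\<forall>\<^sub>F e in at 0. cmod x1 * cmod x2 * cmod (x3 e) * cmod (x4 e) < exp M"
    using order_tendstoD(2)[OF limP M] .
  show ?thesis
    using ev_in ev_ne ev1 ev2 evP
  proof eventually_elim
    case (elim e)
    have "coman_lempert [(a, 0), (b, 0), (b, e), (a, e)] z
     \<le> elog (cmod x1) + elog (cmod x2) + elog (cmod (x3 e)) + elog (cmod (x4 e))"
      by (rule L2[OF F1h F2h bd z]) (use pa' pb' elim in \<open>auto\<close>)
    also have "\<dots> = elog (cmod x1 * cmod x2 * cmod (x3 e) * cmod (x4 e))"
      by (simp add: elog_mult)
    also have "\<dots> \<le> ereal M" using elim by (intro elog_le_exp) auto
    finally show ?case .
  qed
qed

lemma pairA: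
  assumes "x1 \<in> unit_disc" "p4 \<in> unit_disc" "p4 \<noteq> 0" "p4 \<noteq> x1"
    "F1 x1 = a" "F2 x1 = 0" "F1 p4 = a" "F2 p4 = 0"
  shows "good_pair F1 F2 a x1 p4 (\<lambda>e. p4 - x1)"
proof -
  have "((\<lambda>e. e / (p4 - x1)) \<longlongrightarrow> 0 / (p4 - x1)) (at (0::complex))"
    by (intro tendsto_intros) (use assms in auto)
  then show ?thesis using assms unfolding good_pair_def by auto
qed

lemma pairB:
  assumes x1: "x1 \<in> unit_disc" "x1 \<noteq> 0" and v: "F1 x1 = a" "F2 x1 = 0"
    and d1: "(F1 has_field_derivative 0) (at x1)" and d2: "(F2 has_field_derivative D2) (at x1)"
  shows "good_pair F1 F2 a x1 x1 (\<lambda>e. e / (D2 + (if D2 = 0 then 1 else sgn D2) * complex_of_real (sqrt (cmod e))))"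
proof -
  define u where "u = (if D2 = 0 then 1 else sgn D2)"
  define den where "den = (\<lambda>e. D2 + u * complex_of_real (sqrt (cmod e)))"
  define h where "h = (\<lambda>e. e / den e)"
  have nden: "cmod (den e) = cmod D2 + sqrt (cmod e)" for e
  proof (cases "D2 = 0")
    case True then show ?thesis by (simp add: den_def u_def)
  next
    case False
    have sg: "sgn D2 * complex_of_real (cmod D2) = D2" using False by (simp add: sgn_eq)
    have "den e = sgn D2 * complex_of_real (cmod D2) + sgn D2 * complex_of_real (sqrt (cmod e))"
      using False sg by (simp add: den_def u_def)
    also have "\<dots> = sgn D2 * complex_of_real (cmod D2 + sqrt (cmod e))"
      by (simp add: distrib_left)
    finally have "den e = sgn D2 * complex_of_real (cmod D2 + sqrt (cmod e))" .
    then have "cmod (den e) = cmod (sgn D2) * cmod (complex_of_real (cmod D2 + sqrt (cmod e)))"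
      by (simp only: norm_mult)
    also have "\<dots> = cmod D2 + sqrt (cmod e)" using False
      by (simp only: norm_sgn norm_of_real) simp
    finally show ?thesis .
  qed
  have den0: "den e \<noteq> 0" if "e \<noteq> 0" for e
  proof -
    have "cmod (den e) > 0" using that by (simp add: nden add_nonneg_pos)
    then show ?thesis by auto
  qed
  have hne: "\<forall>\<^sub>F e in at 0. h e \<noteq> 0"
    using eventually_at_filter[of "\<lambda>e. h e \<noteq> 0" 0 UNIV] 
    by (auto simp: h_def den0 intro!: always_eventually)
  have hbd: "cmod (h e) \<le> sqrt (cmod e)" for e
  proof (cases "e = 0")
    case False
    have "cmod (h e) = cmod e / (cmod D2 + sqrt (cmod e))" by (simp add: h_def norm_divide nden)
    also have "\<dots> \<le> cmod e / sqrt (cmod e)"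
      using False by (intro divide_left_mono) (auto intro!: mult_pos_pos add_nonneg_pos)
    also have "\<dots> = sqrt (cmod e)" using False by (metis real_div_sqrt norm_ge_zero)
    finally show ?thesis .
  qed (simp add: h_def)
  have hlim: "(h \<longlongrightarrow> 0) (at 0)"
  proof (rule Lim_null_comparison[where g = "\<lambda>e. sqrt (cmod e)"])
    show "\<forall>\<^sub>F e in at 0. norm (h e) \<le> sqrt (cmod e)" by (simp add: hbd)
    have "((\<lambda>e::complex. sqrt (cmod e)) \<longlongrightarrow> sqrt (cmod 0)) (at 0)" by (intro tendsto_intros)
    then show "((\<lambda>e::complex. sqrt (cmod e)) \<longlongrightarrow> 0) (at 0)" by simp
  qed
  have hfl: "filterlim h (at 0) (at 0)" using hlim hne by (intro filterlim_atI)
  have g1: "((\<lambda>t. (F1 (x1 + t) - F1 x1) / t) \<longlongrightarrow> 0) (at 0)" using d1 by (simp add: DERIV_def)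
  have g2: "((\<lambda>t. (F2 (x1 + t) - F2 x1) / t) \<longlongrightarrow> D2) (at 0)" using d2 by (simp add: DERIV_def)
  have c1: "((\<lambda>e. (F1 (x1 + h e) - F1 x1) / h e) \<longlongrightarrow> 0) (at 0)"
    using filterlim_compose[OF g1 hfl] by (simp add: o_def)
  have c2: "((\<lambda>e. (F2 (x1 + h e) - F2 x1) / h e) \<longlongrightarrow> D2) (at 0)"
    using filterlim_compose[OF g2 hfl] by (simp add: o_def)
  have t1: "((\<lambda>e. (a - F1 (x1 + h e)) / h e) \<longlongrightarrow> 0) (at 0)"
  proof -
    have "((\<lambda>e. - ((F1 (x1 + h e) - F1 x1) / h e)) \<longlongrightarrow> - 0) (at 0)" by (intro tendsto_intros c1)
    then show ?thesis using v by (simp add: minus_divide_left)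
  qed
  have denlim: "(den \<longlongrightarrow> D2 + u * complex_of_real (sqrt (cmod 0))) (at 0)"
    unfolding den_def by (intro tendsto_intros)
  have t2: "((\<lambda>e. (e - F2 (x1 + h e)) / h e) \<longlongrightarrow> 0) (at 0)"
  proof -
    have "((\<lambda>e. den e - (F2 (x1 + h e) - F2 x1) / h e) \<longlongrightarrow> D2 - D2) (at 0)"
      using tendsto_diff[OF denlim c2] by simp
    then have l: "((\<lambda>e. den e - (F2 (x1 + h e) - F2 x1) / h e) \<longlongrightarrow> 0) (at 0)" by simp
    show ?thesis
    proof (rule Lim_transform_eventually[OF l])
      show "\<forall>\<^sub>F e in at 0. den e - (F2 (x1 + h e) - F2 x1) / h e = (e - F2 (x1 + h e)) / h e"
        using eventually_at_filter[of "\<lambda>e. den e - (F2 (x1 + h e) - F2 x1) / h e = (e - F2 (x1 + h e)) / h e" 0 UNIV]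
        using den0 v by (auto simp: h_def field_simps intro!: always_eventually)
    qed
  qed
  show ?thesis unfolding good_pair_def
    using x1 v hlim hne t1 t2 by (simp add: h_def den_def u_def)
qed

definition gB :: "complex \<Rightarrow> complex \<Rightarrow> complex \<Rightarrow> complex" where
  "gB A \<beta> l = l * (A * l + \<beta>) / (cnj \<beta> * l + cnj A)"
lemma gB_den_ne:
  assumes "cmod \<beta> < cmod A" "cmod l \<le> 1" shows "cnj \<beta> * l + cnj A \<noteq> 0"
proof
  assume "cnj \<beta> * l + cnj A = 0"
  then have "cnj A = - (cnj \<beta> * l)" by (simp add: add_eq_0_iff2 add.commute)
  then have "cmod A = cmod \<beta> * cmod l" by (metis complex_mod_cnj norm_minus_cancel norm_mult)
  also have "\<dots> \<le> cmod \<beta>" using assms(2) by (simp add: mult_left_le)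
  finally show False using assms(1) by simp
qed


lemma cmod_sq: "cmod z ^ 2 = Re z ^ 2 + Im z ^ 2"
  by (simp add: cmod_def)

lemma gB_ident: "cmod (cnj \<beta> * l + cnj A) ^ 2 - cmod (A * l + \<beta>) ^ 2 = (cmod A ^ 2 - cmod \<beta> ^ 2) * (1 - cmod l ^ 2)"
  unfolding cmod_sq by (simp add: algebra_simps power2_eq_square)

lemma gB_holo: assumes "cmod \<beta> < cmod A" shows "gB A \<beta> holomorphic_on unit_disc"
  unfolding gB_def using gB_den_ne[OF assms]
  by (intro holomorphic_intros) (auto simp: dist_norm)

lemma gB_maps: assumes "cmod \<beta> < cmod A" "l \<in> unit_disc" shows "gB A \<beta> l \<in> unit_disc"
proof -
  have l: "cmod l < 1" using assms by (simp add: dist_norm)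
  have "cmod (A * l + \<beta>) ^ 2 < cmod (cnj \<beta> * l + cnj A) ^ 2"
  proof -
    have p1: "cmod \<beta> ^ 2 < cmod A ^ 2" using assms(1) by (simp add: power_strict_mono)
    have p2: "cmod l ^ 2 < 1" using l by (simp add: power_less_one_iff)
    have "0 < (cmod A ^ 2 - cmod \<beta> ^ 2) * (1 - cmod l ^ 2)"
      using p1 p2 by (intro mult_pos_pos) simp_all
    then show ?thesis using gB_ident[of \<beta> l A] by linarith
  qed
  then have lt: "cmod (A * l + \<beta>) < cmod (cnj \<beta> * l + cnj A)"
    by (rule power2_less_imp_less) simp
  define q where "q = cmod (A * l + \<beta>) / cmod (cnj \<beta> * l + cnj A)"
  have q1: "q < 1" using lt by (simp add: q_def divide_less_eq)
  have q0: "q \<ge> 0" by (simp add: q_def)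
  have "cmod (gB A \<beta> l) = cmod l * q"
    by (simp add: gB_def norm_mult norm_divide q_def)
  also have "\<dots> \<le> 1 * q" using l q0 by (intro mult_right_mono) simp_all
  also have "\<dots> < 1" using q1 by simp
  finally show ?thesis by (simp add: dist_norm)
qed


lemma gB_zero: "gB A \<beta> 0 = 0" by (simp add: gB_def)

lemma gB_other_zero: "A \<noteq> 0 \<Longrightarrow> gB A \<beta> (- \<beta> / A) = 0" by (simp add: gB_def)

lemma theta_params:
  fixes \<rho> :: real
  assumes "\<theta> \<in> unit_disc" "0 < \<rho>" "\<rho> < 1"
  shows "cmod (complex_of_real \<rho> - \<theta>) < cmod (1 - complex_of_real \<rho> * cnj \<theta>)"
    "gB (1 - complex_of_real \<rho> * cnj \<theta>) (complex_of_real \<rho> - \<theta>) \<theta> = complex_of_real \<rho> * \<theta>"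
proof -
  have id: "cmod (1 - complex_of_real \<rho> * cnj \<theta>) ^ 2 - cmod (complex_of_real \<rho> - \<theta>) ^ 2 = (1 - \<rho>^2) * (1 - cmod \<theta> ^ 2)"
    unfolding cmod_sq by (simp add: algebra_simps power2_eq_square)
  have t: "cmod \<theta> < 1" using assms by (simp add: dist_norm)
  have p1: "\<rho>^2 < 1" using assms by (simp add: power_less_one_iff)
  have p2: "cmod \<theta> ^ 2 < 1" using t by (simp add: power_less_one_iff)
  have "0 < (1 - \<rho>^2) * (1 - cmod \<theta> ^ 2)"
    using p1 p2 by (intro mult_pos_pos) simp_all
  then have "cmod (complex_of_real \<rho> - \<theta>) ^ 2 < cmod (1 - complex_of_real \<rho> * cnj \<theta>) ^ 2" using id by linarith
  then show "cmod (complex_of_real \<rho> - \<theta>) < cmod (1 - complex_of_real \<rho> * cnj \<theta>)"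
    by (rule power2_less_imp_less) simp
  have den: "cnj (complex_of_real \<rho> - \<theta>) * \<theta> + cnj (1 - complex_of_real \<rho> * cnj \<theta>) = 1 - \<theta> * cnj \<theta>"
    by (simp add: algebra_simps)
  have num: "(1 - complex_of_real \<rho> * cnj \<theta>) * \<theta> + (complex_of_real \<rho> - \<theta>) = complex_of_real \<rho> * (1 - \<theta> * cnj \<theta>)"
    by (simp add: algebra_simps)
  have nz: "1 - \<theta> * cnj \<theta> \<noteq> 0"
  proof
    assume "1 - \<theta> * cnj \<theta> = 0"
    then have "\<theta> * cnj \<theta> = 1" by simp
    then have "complex_of_real (cmod \<theta> ^ 2) = 1" using complex_norm_square[of \<theta>] by simp
    then have "cmod \<theta> ^ 2 = 1" by (simp only: of_real_eq_1_iff)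
    then show False using p2 by simp
  qed
  show "gB (1 - complex_of_real \<rho> * cnj \<theta>) (complex_of_real \<rho> - \<theta>) \<theta> = complex_of_real \<rho> * \<theta>"
    unfolding gB_def mult.assoc[symmetric] num den using nz by simp
qed



lemma root_in_disc:
  assumes "x * (A * x + \<beta>) = w * (cnj \<beta> * x + cnj A)" "cmod w < 1" "cmod \<beta> < cmod A"
  shows "cmod x < 1"
proof (rule ccontr)
  assume "\<not> cmod x < 1" then have x1: "cmod x \<ge> 1" by simp
  have A0: "A \<noteq> 0" using assms(3) by auto
  have "(cmod A ^ 2 - cmod \<beta> ^ 2) * (1 - cmod x ^ 2) \<le> 0"
  proof (rule mult_nonneg_nonpos)
    show "0 \<le> cmod A ^ 2 - cmod \<beta> ^ 2" using assms(3) by (simp add: power_mono)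
    show "1 - cmod x ^ 2 \<le> 0" using x1 by (simp add: one_le_power)
  qed
  then have "cmod (cnj \<beta> * x + cnj A) ^ 2 \<le> cmod (A * x + \<beta>) ^ 2" using gB_ident[of \<beta> x A] by linarith
  then have dle: "cmod (cnj \<beta> * x + cnj A) \<le> cmod (A * x + \<beta>)" by (rule power2_le_imp_le) simp
  have eq: "cmod x * cmod (A * x + \<beta>) = cmod w * cmod (cnj \<beta> * x + cnj A)"
    using arg_cong[OF assms(1), of cmod] by (simp add: norm_mult)
  show False
  proof (cases "A * x + \<beta> = 0")
    case True
    then have "x = - \<beta> / A" using A0 by (simp add: field_simps add_eq_0_iff2)
    then have "cmod x = cmod \<beta> / cmod A" by (simp add: norm_divide)
    also have "\<dots> < 1" using assms(3) A0 by simp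
    finally show False using x1 by simp
  next
    case False
    then have pos: "cmod (A * x + \<beta>) > 0" by simp
    have "cmod x * cmod (A * x + \<beta>) \<le> cmod w * cmod (A * x + \<beta>)"
      unfolding eq by (intro mult_left_mono dle) simp
    then have "cmod x \<le> cmod w" using pos by simp
    then show False using x1 assms(2) by simp
  qed
qed

lemma gB_roots:
  assumes b: "cmod \<beta> < cmod A" and w: "w \<in> unit_disc"
  shows "\<exists>l1 l2. l1 \<in> unit_disc \<and> l2 \<in> unit_disc \<and> gB A \<beta> l1 = w \<and> gB A \<beta> l2 = w \<and>
     cmod l1 * cmod l2 = cmod w \<and> (l1 \<noteq> l2 \<or> (gB A \<beta> has_field_derivative 0) (at l1))"
proof -
  have A0: "A \<noteq> 0" using b by auto
  define B where "B = \<beta> - w * cnj \<beta>"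
  define C where "C = - w * cnj A"
  define s where "s = csqrt (B^2 - 4*A*C)"
  define l1 where "l1 = (-B + s) / (2*A)"
  define l2 where "l2 = (-B - s) / (2*A)"
  have s2: "s^2 = B^2 - 4*A*C" by (simp add: s_def)
  have sum: "l1 + l2 = - B / A" using A0 by (simp add: l1_def l2_def field_simps)
  have prod: "l1 * l2 = C / A"
  proof -
    have "l1 * l2 = (B^2 - s^2) / (4 * A^2)" using A0
      by (simp add: l1_def l2_def field_simps power2_eq_square)
    also have "\<dots> = C / A" using A0 unfolding s2 by (simp add: field_simps power2_eq_square)
    finally show ?thesis .
  qed
  have fact: "A * x^2 + B * x + C = A * (x - l1) * (x - l2)" for x
  proof -
    have "A * (x - l1) * (x - l2) = A * x^2 - A * (l1 + l2) * x + A * (l1 * l2)"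
      by (simp add: algebra_simps power2_eq_square)
    also have "\<dots> = A * x^2 + B * x + C" unfolding sum prod using A0 by (simp add: field_simps)
    finally show ?thesis by simp
  qed
  have key: "x * (A * x + \<beta>) - w * (cnj \<beta> * x + cnj A) = A * x^2 + B * x + C" for x
    by (simp add: B_def C_def algebra_simps power2_eq_square)
  have wl: "cmod w < 1" using w by (simp add: dist_norm)
  have root: "x \<in> unit_disc \<and> gB A \<beta> x = w" if "x = l1 \<or> x = l2" for x
  proof -
    have "A * x^2 + B * x + C = 0" using that fact by auto
    then have e: "x * (A * x + \<beta>) = w * (cnj \<beta> * x + cnj A)" using key[of x] by simp
    then have xl: "cmod x < 1" using root_in_disc wl b by blast
    then have "cnj \<beta> * x + cnj A \<noteq> 0" using gB_den_ne b by simp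
    then have "gB A \<beta> x = w" unfolding gB_def using e by (simp add: field_simps)
    then show ?thesis using xl by (simp add: dist_norm)
  qed
  have pm: "cmod l1 * cmod l2 = cmod w"
  proof -
    have "cmod l1 * cmod l2 = cmod (C / A)" by (simp add: prod[symmetric] norm_mult)
    also have "\<dots> = cmod w" using A0 by (simp add: C_def norm_mult norm_divide)
    finally show ?thesis .
  qed
  have dd: "(gB A \<beta> has_field_derivative 0) (at l1)" if eq: "l1 = l2"
  proof -
    define G where "G = (\<lambda>x. w + A * (x - l1)^2 / (cnj \<beta> * x + cnj A))"
    have l1D: "l1 \<in> unit_disc" using root by auto
    have dn: "cnj \<beta> * l1 + cnj A \<noteq> 0" using gB_den_ne b l1D by (simp add: dist_norm)
    have "(G has_field_derivative 
       (A * (2 * (l1 - l1)) * (cnj \<beta> * l1 + cnj A) - A * (l1 - l1)^2 * cnj \<beta>) / (cnj \<beta> * l1 + cnj A)^2) (at l1)"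
      unfolding G_def using dn
      by (auto intro!: derivative_eq_intros simp: power2_eq_square field_simps)
    then have G': "(G has_field_derivative 0) (at l1)" by simp
    show ?thesis
    proof (rule has_field_derivative_transform_within_open[OF G' open_ball l1D])
      fix x assume x: "x \<in> unit_disc"
      have dnx: "cnj \<beta> * x + cnj A \<noteq> 0" using gB_den_ne b x by (simp add: dist_norm)
      have "gB A \<beta> x - w = (x * (A * x + \<beta>) - w * (cnj \<beta> * x + cnj A)) / (cnj \<beta> * x + cnj A)"
        unfolding gB_def using dnx by (simp add: field_simps)
      also have "\<dots> = A * (x - l1)^2 / (cnj \<beta> * x + cnj A)"
        unfolding key fact eq by (simp add: power2_eq_square)
      finally show "G x = gB A \<beta> x" by (simp add: G_def algebra_simps)
    qed
  qed
  show ?thesis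
    using root[of l1] root[of l2] pm dd by blast
qed

lemma setup_F:
  assumes dm: "disc_map \<phi>1 \<phi>2" and r: "0 < r" "r < 1"
    and G: "G holomorphic_on unit_disc" "\<forall>l\<in>unit_disc. G l \<in> unit_disc"
  shows "(\<lambda>l. \<phi>1 (complex_of_real r * G l)) holomorphic_on unit_disc"
    "(\<lambda>l. \<phi>2 (complex_of_real r * G l)) holomorphic_on unit_disc"
    "\<exists>K<1. \<forall>l\<in>unit_disc. cmod (\<phi>1 (complex_of_real r * G l)) \<le> K \<and> cmod (\<phi>2 (complex_of_real r * G l)) \<le> K"
    "\<And>l DG. l \<in> unit_disc \<Longrightarrow> (G has_field_derivative DG) (at l) \<Longrightarrow>
       ((\<lambda>l. \<phi>1 (complex_of_real r * G l)) has_field_derivative deriv \<phi>1 (complex_of_real r * G l) * (complex_of_real r * DG)) (at l)"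
    "\<And>l DG. l \<in> unit_disc \<Longrightarrow> (G has_field_derivative DG) (at l) \<Longrightarrow>
       ((\<lambda>l. \<phi>2 (complex_of_real r * G l)) has_field_derivative deriv \<phi>2 (complex_of_real r * G l) * (complex_of_real r * DG)) (at l)"
proof -
  have h1: "\<phi>1 holomorphic_on unit_disc" and h2: "\<phi>2 holomorphic_on unit_disc"
    and m1: "\<phi>1 ` unit_disc \<subseteq> unit_disc" and m2: "\<phi>2 ` unit_disc \<subseteq> unit_disc"
    using dm by (auto simp: disc_map_def)
  have inD: "complex_of_real r * G l \<in> unit_disc" if "l \<in> unit_disc" for l
  proof -
    have "cmod (G l) < 1" using G(2) that by (auto simp: dist_norm)
    then have "r * cmod (G l) < 1" using r by (smt (verit) mult_left_le_one_le norm_ge_zero)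
    then show ?thesis using r by (simp add: dist_norm norm_mult)
  qed
  have Gr: "(\<lambda>l. complex_of_real r * G l) holomorphic_on unit_disc"
    by (intro holomorphic_intros G(1))
  have sub: "(\<lambda>l. complex_of_real r * G l) ` unit_disc \<subseteq> unit_disc" using inD by auto
  show "(\<lambda>l. \<phi>1 (complex_of_real r * G l)) holomorphic_on unit_disc"
    using holomorphic_on_compose_gen[OF Gr h1 sub] by (simp add: o_def)
  show "(\<lambda>l. \<phi>2 (complex_of_real r * G l)) holomorphic_on unit_disc"
    using holomorphic_on_compose_gen[OF Gr h2 sub] by (simp add: o_def)
  have cb: "cball 0 r \<subseteq> unit_disc" using r by auto
  have sup: "\<exists>K<1. \<forall>y\<in>cball 0 r. cmod (\<phi> y) \<le> K" if "\<phi> holomorphic_on unit_disc" "\<phi> ` unit_disc \<subseteq> unit_disc" for \<phi>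
  proof -
    have "continuous_on (cball 0 r) (\<lambda>y. cmod (\<phi> y))"
      using holomorphic_on_imp_continuous_on[OF that(1)] cb
      by (intro continuous_intros) (auto intro: continuous_on_subset)
    then obtain y0 where y0: "y0 \<in> cball 0 r" "\<forall>y\<in>cball 0 r. cmod (\<phi> y) \<le> cmod (\<phi> y0)"
      using continuous_attains_sup[OF compact_cball, of 0 r] r by fastforce
    have "y0 \<in> unit_disc" using cb y0(1) by blast
    then have "\<phi> y0 \<in> unit_disc" using that(2) by blast
    then have "cmod (\<phi> y0) < 1" by (simp add: dist_norm)
    then show ?thesis using y0 by blast
  qed
  obtain K1 where K1: "K1 < 1" "\<forall>y\<in>cball 0 r. cmod (\<phi>1 y) \<le> K1" using sup[OF h1 m1] by blast
  obtain K2 where K2: "K2 < 1" "\<forall>y\<in>cball 0 r. cmod (\<phi>2 y) \<le> K2" using sup[OF h2 m2] by blast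
  have inC: "complex_of_real r * G l \<in> cball 0 r" if "l \<in> unit_disc" for l
  proof -
    have "cmod (G l) < 1" using G(2) that by (auto simp: dist_norm)
    then have "r * cmod (G l) \<le> r" using r by (simp add: mult_left_le)
    then show ?thesis using r by (simp add: dist_norm norm_mult)
  qed
  show "\<exists>K<1. \<forall>l\<in>unit_disc. cmod (\<phi>1 (complex_of_real r * G l)) \<le> K \<and> cmod (\<phi>2 (complex_of_real r * G l)) \<le> K"
    using K1 K2 inC by (intro exI[of _ "max K1 K2"]) (auto simp: le_max_iff_disj)
  fix l DG assume l: "l \<in> unit_disc" and dG: "(G has_field_derivative DG) (at l)"
  have dr: "((\<lambda>l. complex_of_real r * G l) has_field_derivative complex_of_real r * DG) (at l)"
    by (intro DERIV_cmult dG)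
  show "((\<lambda>l. \<phi>1 (complex_of_real r * G l)) has_field_derivative deriv \<phi>1 (complex_of_real r * G l) * (complex_of_real r * DG)) (at l)"
    by (rule DERIV_chain2[OF holomorphic_derivI[OF h1 open_ball inD[OF l]] dr])
  show "((\<lambda>l. \<phi>2 (complex_of_real r * G l)) has_field_derivative deriv \<phi>2 (complex_of_real r * G l) * (complex_of_real r * DG)) (at l)"
    by (rule DERIV_chain2[OF holomorphic_derivI[OF h2 open_ball inD[OF l]] dr])
qed

lemma sideA0:
  assumes dm: "disc_map \<phi>1 \<phi>2" and r: "0 < r" "r < 1" and b: "cmod \<beta> < cmod A"
    and w: "w \<in> unit_disc" and v: "\<phi>1 (complex_of_real r * w) = a" "\<phi>2 (complex_of_real r * w) = 0"
    and nz: "w \<noteq> 0 \<or> \<beta> \<noteq> 0"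
  shows "\<exists>x1 p4 h. good_pair (\<lambda>l. \<phi>1 (complex_of_real r * gB A \<beta> l)) (\<lambda>l. \<phi>2 (complex_of_real r * gB A \<beta> l)) a x1 p4 h
     \<and> cmod x1 * cmod p4 = cmod w"
proof -
  have A0: "A \<noteq> 0" using b by auto
  have G: "gB A \<beta> holomorphic_on unit_disc" "\<forall>l\<in>unit_disc. gB A \<beta> l \<in> unit_disc"
    using gB_holo[OF b] gB_maps[OF b] by auto
  note S = setup_F[OF dm r G]
  show ?thesis
  proof (cases "w = 0")
    case True
    then have bn: "\<beta> \<noteq> 0" using nz by simp
    have "cmod \<beta> / cmod A < 1" using b A0 by (simp add: divide_less_eq)
    then have p4D': "cmod (\<beta> / A) < 1" by (simp add: norm_divide)
    then have p4D: "- \<beta> / A \<in> unit_disc" by (simp add: dist_norm)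
    have "good_pair (\<lambda>l. \<phi>1 (complex_of_real r * gB A \<beta> l)) (\<lambda>l. \<phi>2 (complex_of_real r * gB A \<beta> l)) a 0 (- \<beta> / A) (\<lambda>e. - \<beta> / A - 0)"
      by (rule pairA) (use bn A0 True v gB_zero gB_other_zero[OF A0] p4D' in auto)
    then show ?thesis using True by fastforce
  next
    case False
    obtain l1 l2 where L: "l1 \<in> unit_disc" "l2 \<in> unit_disc" "gB A \<beta> l1 = w" "gB A \<beta> l2 = w"
      "cmod l1 * cmod l2 = cmod w" "l1 \<noteq> l2 \<or> (gB A \<beta> has_field_derivative 0) (at l1)"
      using gB_roots[OF b w] by blast
    have nz1: "l1 \<noteq> 0" "l2 \<noteq> 0" using L(5) False by auto
    show ?thesis
    proof (cases "l1 = l2")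
      case False
      have "good_pair (\<lambda>l. \<phi>1 (complex_of_real r * gB A \<beta> l)) (\<lambda>l. \<phi>2 (complex_of_real r * gB A \<beta> l)) a l1 l2 (\<lambda>e. l2 - l1)"
        by (rule pairA) (use L nz1 v False in auto)
      then show ?thesis using L(5) by blast
    next
      case True
      then have dg: "(gB A \<beta> has_field_derivative 0) (at l1)" using L(6) by simp
      have "good_pair (\<lambda>l. \<phi>1 (complex_of_real r * gB A \<beta> l)) (\<lambda>l. \<phi>2 (complex_of_real r * gB A \<beta> l)) a l1 l1
         (\<lambda>e. e / (0 + (if (0::complex) = 0 then 1 else sgn 0) * complex_of_real (sqrt (cmod e))))"
        using S(4)[OF L(1) dg] S(5)[OF L(1) dg]
        by (intro pairB) (use L nz1 v in auto)
      then show ?thesis using L(5) True by fastforce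
    qed
  qed
qed

lemma choose_r:
  fixes c t E :: real
  assumes "c < 1" "t < E"
  shows "\<exists>r. 0 < r \<and> r < 1 \<and> c < r \<and> c < r^3 \<and> t / r^2 < E \<and> t / r^4 < E \<and> t / r^5 < E"
proof -
  have e0: "\<forall>\<^sub>F r in at_left (1::real). r \<in> {max c 0<..<1}"
    using eventually_at_left_real[of "max c 0" 1] assms(1) by simp
  have l3: "((\<lambda>r::real. r^3) \<longlongrightarrow> 1^3) (at_left 1)" by (intro tendsto_intros)
  have e3: "\<forall>\<^sub>F r in at_left (1::real). c < r^3" using order_tendstoD(1)[OF l3] assms(1) by simp
  have lt: "((\<lambda>r::real. t / r^n) \<longlongrightarrow> t / 1^n) (at_left 1)" for n
    by (intro tendsto_intros) auto
  have et: "\<forall>\<^sub>F r in at_left (1::real). t / r^n < E" for n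
    using order_tendstoD(2)[OF lt[of n]] assms(2) by simp
  have "\<forall>\<^sub>F r in at_left (1::real). r \<in> {max c 0<..<1} \<and> c < r^3 \<and> t / r^2 < E \<and> t / r^4 < E \<and> t / r^5 < E"
    using e0 e3 et[of 2] et[of 4] et[of 5] by eventually_elim auto
  then obtain r where "r \<in> {max c 0<..<1} \<and> c < r^3 \<and> t / r^2 < E \<and> t / r^4 < E \<and> t / r^5 < E"
    using eventually_happens[of _ "at_left (1::real)"] by auto
  then show ?thesis by (intro exI[of _ r]) auto
qed

lemma div_r_disc:
  assumes "\<zeta> \<in> unit_disc" "0 < r" "cmod \<zeta> < r"
  shows "\<zeta> / complex_of_real r \<in> unit_disc" "complex_of_real r * (\<zeta> / complex_of_real r) = \<zeta>"
    "cmod (\<zeta> / complex_of_real r) = cmod \<zeta> / r"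
proof -
  show c: "cmod (\<zeta> / complex_of_real r) = cmod \<zeta> / r" using assms by (simp add: norm_divide)
  show "\<zeta> / complex_of_real r \<in> unit_disc" using assms by (simp add: dist_norm c divide_less_eq)
  show "complex_of_real r * (\<zeta> / complex_of_real r) = \<zeta>" using assms by simp
qed

lemma bound_a0b0:
  assumes ab: "a \<noteq> b" and dm: "disc_map \<phi>1 \<phi>2" and z: "(\<phi>1 0, \<phi>2 0) = z"
    and zs: "\<zeta>1 \<in> unit_disc" "\<zeta>2 \<in> unit_disc"
    and v1: "(\<phi>1 \<zeta>1, \<phi>2 \<zeta>1) = (a, 0)" and v2: "(\<phi>1 \<zeta>2, \<phi>2 \<zeta>2) = (b, 0)"
  shows "Limsup (at 0) (\<lambda>e. coman_lempert [(a, 0), (b, 0), (b, e), (a, e)] z) \<le> elog (cmod \<zeta>1) + elog (cmod \<zeta>2)"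
proof (rule ereal_le_by_reals)
  fix M assume "elog (cmod \<zeta>1) + elog (cmod \<zeta>2) < ereal M"
  then have t: "cmod \<zeta>1 * cmod \<zeta>2 < exp M" by (intro elog_less_imp) (simp_all add: elog_mult)
  have c1: "max (cmod \<zeta>1) (cmod \<zeta>2) < 1" using zs by (simp add: dist_norm)
  obtain r where r: "0 < r" "r < 1" "max (cmod \<zeta>1) (cmod \<zeta>2) < r" "cmod \<zeta>1 * cmod \<zeta>2 / r^2 < exp M"
    using choose_r[OF c1 t] by blast
  define w1 where "w1 = \<zeta>1 / complex_of_real r"
  define w2 where "w2 = \<zeta>2 / complex_of_real r"
  have W1: "w1 \<in> unit_disc" "complex_of_real r * w1 = \<zeta>1" "cmod w1 = cmod \<zeta>1 / r"
    unfolding w1_def using div_r_disc[OF zs(1) r(1)] r(3) by auto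
  have W2: "w2 \<in> unit_disc" "complex_of_real r * w2 = \<zeta>2" "cmod w2 = cmod \<zeta>2 / r"
    unfolding w2_def using div_r_disc[OF zs(2) r(1)] r(3) by auto
  have bA: "cmod (1/2 :: complex) < cmod (1::complex)" by simp
  define F1 where "F1 = (\<lambda>l. \<phi>1 (complex_of_real r * gB 1 (1/2) l))"
  define F2 where "F2 = (\<lambda>l. \<phi>2 (complex_of_real r * gB 1 (1/2) l))"
  obtain x1 p4 h where P1: "good_pair F1 F2 a x1 p4 h" "cmod x1 * cmod p4 = cmod w1"
    using sideA0[OF dm r(1,2) bA W1(1)] v1 W1(2) unfolding F1_def F2_def by auto
  obtain x2 p3 k where P2: "good_pair F1 F2 b x2 p3 k" "cmod x2 * cmod p3 = cmod w2"
    using sideA0[OF dm r(1,2) bA W2(1)] v2 W2(2) unfolding F1_def F2_def by auto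
  have G: "gB 1 (1/2) holomorphic_on unit_disc" "\<forall>l\<in>unit_disc. gB 1 (1/2) l \<in> unit_disc"
    using gB_holo[OF bA] gB_maps[OF bA] by auto
  note S = setup_F[OF dm r(1,2) G, folded F1_def F2_def]
  obtain K where K: "K < 1" "\<forall>l\<in>unit_disc. cmod (F1 l) \<le> K \<and> cmod (F2 l) \<le> K" using S(3) unfolding F1_def F2_def by blast
  have F0: "F1 0 = fst z" "F2 0 = snd z" using z by (auto simp: F1_def F2_def gB_zero)
  have "cmod x1 * cmod x2 * cmod p3 * cmod p4 = (cmod x1 * cmod p4) * (cmod x2 * cmod p3)" by simp
  also have "\<dots> = cmod \<zeta>1 * cmod \<zeta>2 / r^2" using P1(2) P2(2) W1(3) W2(3) by (simp add: power2_eq_square)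
  finally have prodM: "cmod x1 * cmod x2 * cmod p3 * cmod p4 < exp M" using r(4) by simp
  show "Limsup (at 0) (\<lambda>e. coman_lempert [(a, 0), (b, 0), (b, e), (a, e)] z) \<le> ereal M"
    by (rule Limsup_bounded, rule L3[OF S(1,2) K(2) K(1) F0 P1(1) P2(1) ab prodM])
qed

lemma elog2: "0 \<le> x \<Longrightarrow> 2 * elog x = elog (x * x)"
  by (auto simp: elog_def ln_mult)

lemma elog0: "elog 0 = -\<infinity>" by (simp add: elog_def)

lemma bound_aVbV:
  assumes ab: "a \<noteq> b" and dm: "disc_map \<phi>1 \<phi>2" and z: "(\<phi>1 0, \<phi>2 0) = z"
    and zs: "\<zeta>1 \<in> unit_disc" "\<zeta>2 \<in> unit_disc"
    and v1: "(\<phi>1 \<zeta>1, \<phi>2 \<zeta>1) = (a, 0)" and v2: "(\<phi>1 \<zeta>2, \<phi>2 \<zeta>2) = (b, 0)"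
    and d1: "deriv \<phi>1 \<zeta>1 = 0" and d2: "deriv \<phi>1 \<zeta>2 = 0"
  shows "Limsup (at 0) (\<lambda>e. coman_lempert [(a, 0), (b, 0), (b, e), (a, e)] z) \<le> 2 * elog (cmod \<zeta>1) + 2 * elog (cmod \<zeta>2)"
proof (cases "\<zeta>1 = 0 \<or> \<zeta>2 = 0")
  case True
  have e1: "elog (cmod \<zeta>1) + elog (cmod \<zeta>2) = -\<infinity>" using True by (auto simp: elog_def)
  have e2: "2 * elog (cmod \<zeta>1) + 2 * elog (cmod \<zeta>2) = -\<infinity>" using True by (auto simp: elog_def)
  show ?thesis using bound_a0b0[OF ab dm z zs v1 v2] unfolding e1 e2 .
next
  case False
  show ?thesis
  proof (rule ereal_le_by_reals)
    fix M assume "2 * elog (cmod \<zeta>1) + 2 * elog (cmod \<zeta>2) < ereal M"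
    moreover have "2 * elog (cmod \<zeta>1) + 2 * elog (cmod \<zeta>2) = elog ((cmod \<zeta>1 * cmod \<zeta>1) * (cmod \<zeta>2 * cmod \<zeta>2))"
      by (simp only: elog2[OF norm_ge_zero] elog_mult[OF mult_nonneg_nonneg[OF norm_ge_zero norm_ge_zero] mult_nonneg_nonneg[OF norm_ge_zero norm_ge_zero]])
    ultimately have t: "(cmod \<zeta>1 * cmod \<zeta>1) * (cmod \<zeta>2 * cmod \<zeta>2) < exp M"
      by (intro elog_less_imp) simp_all
    have c1: "max (cmod \<zeta>1) (cmod \<zeta>2) < 1" using zs by (simp add: dist_norm)
    obtain r where r: "0 < r" "r < 1" "max (cmod \<zeta>1) (cmod \<zeta>2) < r" "(cmod \<zeta>1 * cmod \<zeta>1) * (cmod \<zeta>2 * cmod \<zeta>2) / r^4 < exp M"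
      using choose_r[OF c1 t] by blast
    define w1 where "w1 = \<zeta>1 / complex_of_real r"
    define w2 where "w2 = \<zeta>2 / complex_of_real r"
    have W1: "w1 \<in> unit_disc" "complex_of_real r * w1 = \<zeta>1" "cmod w1 = cmod \<zeta>1 / r"
      unfolding w1_def using div_r_disc[OF zs(1) r(1)] r(3) by auto
    have W2: "w2 \<in> unit_disc" "complex_of_real r * w2 = \<zeta>2" "cmod w2 = cmod \<zeta>2 / r"
      unfolding w2_def using div_r_disc[OF zs(2) r(1)] r(3) by auto
    have nz: "w1 \<noteq> 0" "w2 \<noteq> 0" using False W1(2) W2(2) by auto
    define F1 where "F1 = (\<lambda>l. \<phi>1 (complex_of_real r * l))"
    define F2 where "F2 = (\<lambda>l. \<phi>2 (complex_of_real r * l))"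
    have G: "(\<lambda>l. l) holomorphic_on unit_disc" "\<forall>l\<in>unit_disc. l \<in> unit_disc" by auto
    note S = setup_F[OF dm r(1,2) G, folded F1_def F2_def]
    have did: "((\<lambda>l. l) has_field_derivative 1) (at l)" for l :: complex by (rule DERIV_ident)
    obtain K where K: "K < 1" "\<forall>l\<in>unit_disc. cmod (F1 l) \<le> K \<and> cmod (F2 l) \<le> K" using S(3) unfolding F1_def F2_def by blast
    have F0: "F1 0 = fst z" "F2 0 = snd z" using z by (auto simp: F1_def F2_def)
    have P1: "good_pair F1 F2 a w1 w1 (\<lambda>e. e / (deriv \<phi>2 \<zeta>1 * (complex_of_real r * 1) + (if deriv \<phi>2 \<zeta>1 * (complex_of_real r * 1) = 0 then 1 else sgn (deriv \<phi>2 \<zeta>1 * (complex_of_real r * 1))) * complex_of_real (sqrt (cmod e))))"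
    proof (rule pairB)
      show "(F1 has_field_derivative 0) (at w1)" using S(4)[OF W1(1) did] W1(2) d1 by (simp add: F1_def)
      show "(F2 has_field_derivative deriv \<phi>2 \<zeta>1 * (complex_of_real r * 1)) (at w1)" using S(5)[OF W1(1) did] W1(2) by (simp add: F2_def)
    qed (use W1 nz v1 in \<open>auto simp: F1_def F2_def\<close>)
    have P2: "good_pair F1 F2 b w2 w2 (\<lambda>e. e / (deriv \<phi>2 \<zeta>2 * (complex_of_real r * 1) + (if deriv \<phi>2 \<zeta>2 * (complex_of_real r * 1) = 0 then 1 else sgn (deriv \<phi>2 \<zeta>2 * (complex_of_real r * 1))) * complex_of_real (sqrt (cmod e))))"
    proof (rule pairB)
      show "(F1 has_field_derivative 0) (at w2)" using S(4)[OF W2(1) did] W2(2) d2 by (simp add: F1_def)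
      show "(F2 has_field_derivative deriv \<phi>2 \<zeta>2 * (complex_of_real r * 1)) (at w2)" using S(5)[OF W2(1) did] W2(2) by (simp add: F2_def)
    qed (use W2 nz v2 in \<open>auto simp: F1_def F2_def\<close>)
    have "cmod w1 * cmod w2 * cmod w2 * cmod w1 = (cmod \<zeta>1 * cmod \<zeta>1) * (cmod \<zeta>2 * cmod \<zeta>2) / r^4"
      using W1(3) W2(3) by (simp add: power4_eq_xxxx field_simps)
    then have prodM: "cmod w1 * cmod w2 * cmod w2 * cmod w1 < exp M" using r(4) by simp
    show "Limsup (at 0) (\<lambda>e. coman_lempert [(a, 0), (b, 0), (b, e), (a, e)] z) \<le> ereal M"
      by (rule Limsup_bounded, rule L3[OF S(1,2) K(2) K(1) F0 P1 P2 ab prodM])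
  qed
qed

lemma theta_setup:
  fixes r :: real
  assumes zs: "\<zeta> \<in> unit_disc" "\<zeta> \<noteq> 0" and r: "0 < r" "r < 1" "cmod \<zeta> < r" "cmod \<zeta> < r^3"
  defines "\<theta> \<equiv> \<zeta> / complex_of_real r / complex_of_real r"
  shows "\<theta> \<in> unit_disc" "\<theta> \<noteq> 0" "cmod \<theta> = cmod \<zeta> / r^2"
    "cmod (complex_of_real r - \<theta>) < cmod (1 - complex_of_real r * cnj \<theta>)"
    "complex_of_real r * gB (1 - complex_of_real r * cnj \<theta>) (complex_of_real r - \<theta>) \<theta> = \<zeta>"
    "complex_of_real r - \<theta> \<noteq> 0"
proof -
  have nr: "cmod (complex_of_real r) = r" using r by simp
  show c: "cmod \<theta> = cmod \<zeta> / r^2" unfolding \<theta>_def norm_divide nr by (simp add: power2_eq_square)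
  have "r^3 \<le> r^2" using r by (intro power_decreasing) auto
  then have "cmod \<zeta> < r^2" using r(4) by linarith
  then have "cmod \<theta> < 1" using c r by (simp add: divide_less_eq)
  then show tD: "\<theta> \<in> unit_disc" by (simp add: dist_norm)
  show "\<theta> \<noteq> 0" using zs r by (simp add: \<theta>_def)
  note T = theta_params[OF tD r(1,2)]
  show "cmod (complex_of_real r - \<theta>) < cmod (1 - complex_of_real r * cnj \<theta>)" using T(1) .
  show "complex_of_real r * gB (1 - complex_of_real r * cnj \<theta>) (complex_of_real r - \<theta>) \<theta> = \<zeta>"
    unfolding T(2) using r by (simp add: \<theta>_def)
  show "complex_of_real r - \<theta> \<noteq> 0"
  proof
    assume "complex_of_real r - \<theta> = 0"
    then have "\<theta> = complex_of_real r" by simp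
    then have "cmod \<theta> = r" using nr by simp
    then have "cmod \<zeta> = r^3" using c r by (simp add: field_simps power2_eq_square power3_eq_cube)
    then show False using r(4) by simp
  qed
qed

lemma bound_aVb0:
  assumes ab: "a \<noteq> b" and dm: "disc_map \<phi>1 \<phi>2" and z: "(\<phi>1 0, \<phi>2 0) = z"
    and zs: "\<zeta>1 \<in> unit_disc" "\<zeta>2 \<in> unit_disc"
    and v1: "(\<phi>1 \<zeta>1, \<phi>2 \<zeta>1) = (a, 0)" and v2: "(\<phi>1 \<zeta>2, \<phi>2 \<zeta>2) = (b, 0)"
    and d1: "deriv \<phi>1 \<zeta>1 = 0"
  shows "Limsup (at 0) (\<lambda>e. coman_lempert [(a, 0), (b, 0), (b, e), (a, e)] z) \<le> 2 * elog (cmod \<zeta>1) + elog (cmod \<zeta>2)"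
proof (cases "\<zeta>1 = 0")
  case True
  have e1: "elog (cmod \<zeta>1) + elog (cmod \<zeta>2) = -\<infinity>" using True by (auto simp: elog_def)
  have e2: "2 * elog (cmod \<zeta>1) + elog (cmod \<zeta>2) = -\<infinity>" using True by (auto simp: elog_def)
  show ?thesis using bound_a0b0[OF ab dm z zs v1 v2] unfolding e1 e2 .
next
  case False
  show ?thesis
  proof (rule ereal_le_by_reals)
    fix M assume "2 * elog (cmod \<zeta>1) + elog (cmod \<zeta>2) < ereal M"
    moreover have "2 * elog (cmod \<zeta>1) + elog (cmod \<zeta>2) = elog ((cmod \<zeta>1 * cmod \<zeta>1) * cmod \<zeta>2)"
      by (simp only: elog2[OF norm_ge_zero] elog_mult[OF mult_nonneg_nonneg[OF norm_ge_zero norm_ge_zero] norm_ge_zero])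
    ultimately have t: "(cmod \<zeta>1 * cmod \<zeta>1) * cmod \<zeta>2 < exp M"
      by (intro elog_less_imp) simp_all
    have c1: "max (cmod \<zeta>1) (cmod \<zeta>2) < 1" using zs by (simp add: dist_norm)
    obtain r where r: "0 < r" "r < 1" "max (cmod \<zeta>1) (cmod \<zeta>2) < r" "max (cmod \<zeta>1) (cmod \<zeta>2) < r^3"
       "(cmod \<zeta>1 * cmod \<zeta>1) * cmod \<zeta>2 / r^5 < exp M"
      using choose_r[OF c1 t] by blast
    define \<theta> where "\<theta> = \<zeta>1 / complex_of_real r / complex_of_real r"
    define A where "A = 1 - complex_of_real r * cnj \<theta>"
    define \<beta> where "\<beta> = complex_of_real r - \<theta>"
    have TH: "\<theta> \<in> unit_disc" "\<theta> \<noteq> 0" "cmod \<theta> = cmod \<zeta>1 / r^2" "cmod \<beta> < cmod A"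
      "complex_of_real r * gB A \<beta> \<theta> = \<zeta>1" "\<beta> \<noteq> 0"
      using theta_setup[OF zs(1) False r(1,2)] r(3,4) unfolding A_def \<beta>_def \<theta>_def by auto
    define w2 where "w2 = \<zeta>2 / complex_of_real r"
    have W2: "w2 \<in> unit_disc" "complex_of_real r * w2 = \<zeta>2" "cmod w2 = cmod \<zeta>2 / r"
      unfolding w2_def using div_r_disc[OF zs(2) r(1)] r(3) by auto
    define F1 where "F1 = (\<lambda>l. \<phi>1 (complex_of_real r * gB A \<beta> l))"
    define F2 where "F2 = (\<lambda>l. \<phi>2 (complex_of_real r * gB A \<beta> l))"
    have G: "gB A \<beta> holomorphic_on unit_disc" "\<forall>l\<in>unit_disc. gB A \<beta> l \<in> unit_disc"
      using gB_holo[OF TH(4)] gB_maps[OF TH(4)] by auto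
    note S = setup_F[OF dm r(1,2) G, folded F1_def F2_def]
    obtain K where K: "K < 1" "\<forall>l\<in>unit_disc. cmod (F1 l) \<le> K \<and> cmod (F2 l) \<le> K" using S(3) unfolding F1_def F2_def by blast
    have F0: "F1 0 = fst z" "F2 0 = snd z" using z by (auto simp: F1_def F2_def gB_zero)
    have dg: "(gB A \<beta> has_field_derivative deriv (gB A \<beta>) \<theta>) (at \<theta>)"
      by (rule holomorphic_derivI[OF G(1) open_ball TH(1)])
    define D2 where "D2 = deriv \<phi>2 \<zeta>1 * (complex_of_real r * deriv (gB A \<beta>) \<theta>)"
    have P1: "good_pair F1 F2 a \<theta> \<theta> (\<lambda>e. e / (D2 + (if D2 = 0 then 1 else sgn D2) * complex_of_real (sqrt (cmod e))))"
    proof (rule pairB)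
      show "(F1 has_field_derivative 0) (at \<theta>)" using S(4)[OF TH(1) dg] TH(5) d1 by (simp add: F1_def)
      show "(F2 has_field_derivative D2) (at \<theta>)" using S(5)[OF TH(1) dg] TH(5) by (simp add: F2_def D2_def)
    qed (use TH v1 in \<open>auto simp: F1_def F2_def\<close>)
    obtain x2 p3 k where P2: "good_pair F1 F2 b x2 p3 k" "cmod x2 * cmod p3 = cmod w2"
      using sideA0[OF dm r(1,2) TH(4) W2(1)] v2 W2(2) TH(6) unfolding F1_def F2_def by auto
    have "cmod \<theta> * cmod x2 * cmod p3 * cmod \<theta> = (cmod \<theta> * cmod \<theta>) * (cmod x2 * cmod p3)" by simp
    also have "\<dots> = (cmod \<zeta>1 / r^2 * (cmod \<zeta>1 / r^2)) * (cmod \<zeta>2 / r)"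
      using TH(3) P2(2) W2(3) by simp
    also have "\<dots> = (cmod \<zeta>1 * cmod \<zeta>1) * cmod \<zeta>2 / r^5"
      using r(1) by (simp add: field_simps eval_nat_numeral)
    finally have prodM: "cmod \<theta> * cmod x2 * cmod p3 * cmod \<theta> < exp M" using r(5) by simp
    show "Limsup (at 0) (\<lambda>e. coman_lempert [(a, 0), (b, 0), (b, e), (a, e)] z) \<le> ereal M"
      by (rule Limsup_bounded, rule L3[OF S(1,2) K(2) K(1) F0 P1 P2(1) ab prodM])
  qed
qed

lemma bound_a0bV:
  assumes ab: "a \<noteq> b" and dm: "disc_map \<phi>1 \<phi>2" and z: "(\<phi>1 0, \<phi>2 0) = z"
    and zs: "\<zeta>1 \<in> unit_disc" "\<zeta>2 \<in> unit_disc"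
    and v1: "(\<phi>1 \<zeta>1, \<phi>2 \<zeta>1) = (a, 0)" and v2: "(\<phi>1 \<zeta>2, \<phi>2 \<zeta>2) = (b, 0)"
    and d2: "deriv \<phi>1 \<zeta>2 = 0"
  shows "Limsup (at 0) (\<lambda>e. coman_lempert [(a, 0), (b, 0), (b, e), (a, e)] z) \<le> elog (cmod \<zeta>1) + 2 * elog (cmod \<zeta>2)"
proof (cases "\<zeta>2 = 0")
  case True
  have e1: "elog (cmod \<zeta>1) + elog (cmod \<zeta>2) = -\<infinity>" using True by (auto simp: elog_def)
  have e2: "elog (cmod \<zeta>1) + 2 * elog (cmod \<zeta>2) = -\<infinity>" using True by (auto simp: elog_def)
  show ?thesis using bound_a0b0[OF ab dm z zs v1 v2] unfolding e1 e2 .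
next
  case False
  show ?thesis
  proof (rule ereal_le_by_reals)
    fix M assume "elog (cmod \<zeta>1) + 2 * elog (cmod \<zeta>2) < ereal M"
    moreover have "elog (cmod \<zeta>1) + 2 * elog (cmod \<zeta>2) = elog (cmod \<zeta>1 * (cmod \<zeta>2 * cmod \<zeta>2))"
      by (simp only: elog2[OF norm_ge_zero] elog_mult[OF norm_ge_zero mult_nonneg_nonneg[OF norm_ge_zero norm_ge_zero]])
    ultimately have t: "cmod \<zeta>1 * (cmod \<zeta>2 * cmod \<zeta>2) < exp M"
      by (intro elog_less_imp) simp_all
    have c1: "max (cmod \<zeta>1) (cmod \<zeta>2) < 1" using zs by (simp add: dist_norm)
    obtain r where r: "0 < r" "r < 1" "max (cmod \<zeta>1) (cmod \<zeta>2) < r" "max (cmod \<zeta>1) (cmod \<zeta>2) < r^3"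
       "cmod \<zeta>1 * (cmod \<zeta>2 * cmod \<zeta>2) / r^5 < exp M"
      using choose_r[OF c1 t] by blast
    define \<theta> where "\<theta> = \<zeta>2 / complex_of_real r / complex_of_real r"
    define A where "A = 1 - complex_of_real r * cnj \<theta>"
    define \<beta> where "\<beta> = complex_of_real r - \<theta>"
    have TH: "\<theta> \<in> unit_disc" "\<theta> \<noteq> 0" "cmod \<theta> = cmod \<zeta>2 / r^2" "cmod \<beta> < cmod A"
      "complex_of_real r * gB A \<beta> \<theta> = \<zeta>2" "\<beta> \<noteq> 0"
      using theta_setup[OF zs(2) False r(1,2)] r(3,4) unfolding A_def \<beta>_def \<theta>_def by auto
    define w1 where "w1 = \<zeta>1 / complex_of_real r"
    have W1: "w1 \<in> unit_disc" "complex_of_real r * w1 = \<zeta>1" "cmod w1 = cmod \<zeta>1 / r"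
      unfolding w1_def using div_r_disc[OF zs(1) r(1)] r(3) by auto
    define F1 where "F1 = (\<lambda>l. \<phi>1 (complex_of_real r * gB A \<beta> l))"
    define F2 where "F2 = (\<lambda>l. \<phi>2 (complex_of_real r * gB A \<beta> l))"
    have G: "gB A \<beta> holomorphic_on unit_disc" "\<forall>l\<in>unit_disc. gB A \<beta> l \<in> unit_disc"
      using gB_holo[OF TH(4)] gB_maps[OF TH(4)] by auto
    note S = setup_F[OF dm r(1,2) G, folded F1_def F2_def]
    obtain K where K: "K < 1" "\<forall>l\<in>unit_disc. cmod (F1 l) \<le> K \<and> cmod (F2 l) \<le> K" using S(3) unfolding F1_def F2_def by blast
    have F0: "F1 0 = fst z" "F2 0 = snd z" using z by (auto simp: F1_def F2_def gB_zero)
    have dg: "(gB A \<beta> has_field_derivative deriv (gB A \<beta>) \<theta>) (at \<theta>)"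
      by (rule holomorphic_derivI[OF G(1) open_ball TH(1)])
    define D2 where "D2 = deriv \<phi>2 \<zeta>2 * (complex_of_real r * deriv (gB A \<beta>) \<theta>)"
    have P2: "good_pair F1 F2 b \<theta> \<theta> (\<lambda>e. e / (D2 + (if D2 = 0 then 1 else sgn D2) * complex_of_real (sqrt (cmod e))))"
    proof (rule pairB)
      show "(F1 has_field_derivative 0) (at \<theta>)" using S(4)[OF TH(1) dg] TH(5) d2 by (simp add: F1_def)
      show "(F2 has_field_derivative D2) (at \<theta>)" using S(5)[OF TH(1) dg] TH(5) by (simp add: F2_def D2_def)
    qed (use TH v2 in \<open>auto simp: F1_def F2_def\<close>)
    obtain x1 p4 h where P1: "good_pair F1 F2 a x1 p4 h" "cmod x1 * cmod p4 = cmod w1"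
      using sideA0[OF dm r(1,2) TH(4) W1(1)] v1 W1(2) TH(6) unfolding F1_def F2_def by auto
    have "cmod x1 * cmod \<theta> * cmod \<theta> * cmod p4 = (cmod x1 * cmod p4) * (cmod \<theta> * cmod \<theta>)" by simp
    also have "\<dots> = (cmod \<zeta>1 / r) * (cmod \<zeta>2 / r^2 * (cmod \<zeta>2 / r^2))"
      using TH(3) P1(2) W1(3) by simp
    also have "\<dots> = cmod \<zeta>1 * (cmod \<zeta>2 * cmod \<zeta>2) / r^5"
      using r(1) by (simp add: field_simps eval_nat_numeral)
    finally have prodM: "cmod x1 * cmod \<theta> * cmod \<theta> * cmod p4 < exp M" using r(5) by simp
    show "Limsup (at 0) (\<lambda>e. coman_lempert [(a, 0), (b, 0), (b, e), (a, e)] z) \<le> ereal M"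
      by (rule Limsup_bounded, rule L3[OF S(1,2) K(2) K(1) F0 P1(1) P2 ab prodM])
  qed
qed

theorem mainTheorem16:
  fixes a b :: complex and z :: "complex \<times> complex"
  assumes "a \<in> unit_disc" and "b \<in> unit_disc" and "a \<noteq> b"
    and "fst z \<in> unit_disc" and "snd z \<in> unit_disc"
  shows "Limsup (at (0::complex))
           (\<lambda>\<epsilon>. coman_lempert [(a, 0), (b, 0), (b, \<epsilon>), (a, \<epsilon>)] z)
         \<le> min (min (L_a0b0 a b z) (L_aVb0 a b z)) (min (L_a0bV a b z) (L_aVbV a b z))"
proof -
  note ab = assms(3)
  have 1: "Limsup (at (0::complex)) (\<lambda>\<epsilon>. coman_lempert [(a, 0), (b, 0), (b, \<epsilon>), (a, \<epsilon>)] z) \<le> L_a0b0 a b z"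
    unfolding L_a0b0_def
  proof (rule Inf_greatest)
    fix x assume "x \<in> {elog (cmod \<zeta>1) + elog (cmod \<zeta>2) | \<phi>1 \<phi>2 \<zeta>1 \<zeta>2.
      disc_map \<phi>1 \<phi>2 \<and> (\<phi>1 0, \<phi>2 0) = z \<and> \<zeta>1 \<in> unit_disc \<and> \<zeta>2 \<in> unit_disc \<and>
      (\<phi>1 \<zeta>1, \<phi>2 \<zeta>1) = (a, 0) \<and> (\<phi>1 \<zeta>2, \<phi>2 \<zeta>2) = (b, 0)}"
    then obtain \<phi>1 \<phi>2 \<zeta>1 \<zeta>2 where x: "x = elog (cmod \<zeta>1) + elog (cmod \<zeta>2)" "disc_map \<phi>1 \<phi>2" "(\<phi>1 0, \<phi>2 0) = z"
      "\<zeta>1 \<in> unit_disc" "\<zeta>2 \<in> unit_disc" "(\<phi>1 \<zeta>1, \<phi>2 \<zeta>1) = (a, 0)" "(\<phi>1 \<zeta>2, \<phi>2 \<zeta>2) = (b, 0)"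
      by blast
    show "Limsup (at (0::complex)) (\<lambda>\<epsilon>. coman_lempert [(a, 0), (b, 0), (b, \<epsilon>), (a, \<epsilon>)] z) \<le> x"
      unfolding x(1) by (rule bound_a0b0[OF ab x(2-7)])
  qed
  have 2: "Limsup (at (0::complex)) (\<lambda>\<epsilon>. coman_lempert [(a, 0), (b, 0), (b, \<epsilon>), (a, \<epsilon>)] z) \<le> L_aVb0 a b z"
    unfolding L_aVb0_def
  proof (rule Inf_greatest)
    fix x assume "x \<in> {2 * elog (cmod \<zeta>1) + elog (cmod \<zeta>2) | \<phi>1 \<phi>2 \<zeta>1 \<zeta>2.
      disc_map \<phi>1 \<phi>2 \<and> (\<phi>1 0, \<phi>2 0) = z \<and> \<zeta>1 \<in> unit_disc \<and> \<zeta>2 \<in> unit_disc \<and>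
      (\<phi>1 \<zeta>1, \<phi>2 \<zeta>1) = (a, 0) \<and> (\<phi>1 \<zeta>2, \<phi>2 \<zeta>2) = (b, 0) \<and>
      deriv \<phi>1 \<zeta>1 = 0}"
    then obtain \<phi>1 \<phi>2 \<zeta>1 \<zeta>2 where x: "x = 2 * elog (cmod \<zeta>1) + elog (cmod \<zeta>2)" "disc_map \<phi>1 \<phi>2" "(\<phi>1 0, \<phi>2 0) = z"
      "\<zeta>1 \<in> unit_disc" "\<zeta>2 \<in> unit_disc" "(\<phi>1 \<zeta>1, \<phi>2 \<zeta>1) = (a, 0)" "(\<phi>1 \<zeta>2, \<phi>2 \<zeta>2) = (b, 0)"
      "deriv \<phi>1 \<zeta>1 = 0"
      by blast
    show "Limsup (at (0::complex)) (\<lambda>\<epsilon>. coman_lempert [(a, 0), (b, 0), (b, \<epsilon>), (a, \<epsilon>)] z) \<le> x"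
      unfolding x(1) by (rule bound_aVb0[OF ab x(2-8)])
  qed
  have 3: "Limsup (at (0::complex)) (\<lambda>\<epsilon>. coman_lempert [(a, 0), (b, 0), (b, \<epsilon>), (a, \<epsilon>)] z) \<le> L_a0bV a b z"
    unfolding L_a0bV_def
  proof (rule Inf_greatest)
    fix x assume "x \<in> {elog (cmod \<zeta>1) + 2 * elog (cmod \<zeta>2) | \<phi>1 \<phi>2 \<zeta>1 \<zeta>2.
      disc_map \<phi>1 \<phi>2 \<and> (\<phi>1 0, \<phi>2 0) = z \<and> \<zeta>1 \<in> unit_disc \<and> \<zeta>2 \<in> unit_disc \<and>
      (\<phi>1 \<zeta>1, \<phi>2 \<zeta>1) = (a, 0) \<and> (\<phi>1 \<zeta>2, \<phi>2 \<zeta>2) = (b, 0) \<and>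
      deriv \<phi>1 \<zeta>2 = 0}"
    then obtain \<phi>1 \<phi>2 \<zeta>1 \<zeta>2 where x: "x = elog (cmod \<zeta>1) + 2 * elog (cmod \<zeta>2)" "disc_map \<phi>1 \<phi>2" "(\<phi>1 0, \<phi>2 0) = z"
      "\<zeta>1 \<in> unit_disc" "\<zeta>2 \<in> unit_disc" "(\<phi>1 \<zeta>1, \<phi>2 \<zeta>1) = (a, 0)" "(\<phi>1 \<zeta>2, \<phi>2 \<zeta>2) = (b, 0)"
      "deriv \<phi>1 \<zeta>2 = 0"
      by blast
    show "Limsup (at (0::complex)) (\<lambda>\<epsilon>. coman_lempert [(a, 0), (b, 0), (b, \<epsilon>), (a, \<epsilon>)] z) \<le> x"
      unfolding x(1) by (rule bound_a0bV[OF ab x(2-8)])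
  qed
  have 4: "Limsup (at (0::complex)) (\<lambda>\<epsilon>. coman_lempert [(a, 0), (b, 0), (b, \<epsilon>), (a, \<epsilon>)] z) \<le> L_aVbV a b z"
    unfolding L_aVbV_def
  proof (rule Inf_greatest)
    fix x assume "x \<in> {2 * elog (cmod \<zeta>1) + 2 * elog (cmod \<zeta>2) | \<phi>1 \<phi>2 \<zeta>1 \<zeta>2.
      disc_map \<phi>1 \<phi>2 \<and> (\<phi>1 0, \<phi>2 0) = z \<and> \<zeta>1 \<in> unit_disc \<and> \<zeta>2 \<in> unit_disc \<and>
      (\<phi>1 \<zeta>1, \<phi>2 \<zeta>1) = (a, 0) \<and> (\<phi>1 \<zeta>2, \<phi>2 \<zeta>2) = (b, 0) \<and>
      deriv \<phi>1 \<zeta>1 = 0 \<and> deriv \<phi>1 \<zeta>2 = 0}"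
    then obtain \<phi>1 \<phi>2 \<zeta>1 \<zeta>2 where x: "x = 2 * elog (cmod \<zeta>1) + 2 * elog (cmod \<zeta>2)" "disc_map \<phi>1 \<phi>2" "(\<phi>1 0, \<phi>2 0) = z"
      "\<zeta>1 \<in> unit_disc" "\<zeta>2 \<in> unit_disc" "(\<phi>1 \<zeta>1, \<phi>2 \<zeta>1) = (a, 0)" "(\<phi>1 \<zeta>2, \<phi>2 \<zeta>2) = (b, 0)"
      "deriv \<phi>1 \<zeta>1 = 0" "deriv \<phi>1 \<zeta>2 = 0"
      by blast
    show "Limsup (at (0::complex)) (\<lambda>\<epsilon>. coman_lempert [(a, 0), (b, 0), (b, \<epsilon>), (a, \<epsilon>)] z) \<le> x"
      unfolding x(1) by (rule bound_aVbV[OF ab x(2-9)])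
  qed
  show ?thesis using 1 2 3 4 by (simp add: min.boundedI)
qed

end
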